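(* Let $T$ be a simplex in $\mathbb{E}^3$ all four of whose facets have the same area. Then the axis of any circumscribing cylinder of $T$ of minimum radius is perpendicular to two opposite edges of $T$ (i.e. to two edges having no vertex in common).
   Context: A cylinder in $\mathbb{E}^3$ is the set of points at a fixed distance $\rho>0$ (its radius) from a line (its axis). A cylinder is circumscribing for a simplex if all vertices of the simplex lie on it. *)

theory Defs
  imports "HOL-Analysis.Analysis" "HOL-Analysis.Cross3"
begin

definition is_line :: "(real^3) set \<Rightarrow> bool" where
  "is_line L \<longleftrightarrow> (\<exists>p u. u \<noteq> 0 \<and> L = {p + t *\<^sub>R u | t. True})"

definition cylinder :: "(real^3) set \<Rightarrow> real \<Rightarrow> (real^3) set" where
  "cylinder L \<rho> = {x. infdist x L = \<rho>}"

definition circumscribing_cylinder ::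
  "(real^3) set \<Rightarrow> real \<Rightarrow> real^3 \<Rightarrow> real^3 \<Rightarrow> real^3 \<Rightarrow> real^3 \<Rightarrow> bool" where
  "circumscribing_cylinder L \<rho> a b c d \<longleftrightarrow>
     is_line L \<and> \<rho> > 0 \<and> {a, b, c, d} \<subseteq> cylinder L \<rho>"

definition min_circumscribing_cylinder ::
  "(real^3) set \<Rightarrow> real \<Rightarrow> real^3 \<Rightarrow> real^3 \<Rightarrow> real^3 \<Rightarrow> real^3 \<Rightarrow> bool" where
  "min_circumscribing_cylinder L \<rho> a b c d \<longleftrightarrow>
     circumscribing_cylinder L \<rho> a b c d \<and>
     (\<forall>L' \<rho>'. circumscribing_cylinder L' \<rho>' a b c d \<longrightarrow> \<rho> \<le> \<rho>')"

definition line_perp :: "(real^3) set \<Rightarrow> real^3 \<Rightarrow> bool" where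
  "line_perp L w \<longleftrightarrow> (\<forall>x\<in>L. \<forall>y\<in>L. inner (x - y) w = 0)"

definition tri_area :: "real^3 \<Rightarrow> real^3 \<Rightarrow> real^3 \<Rightarrow> real" where
  "tri_area a b c = norm (cross3 (b - a) (c - a)) / 2"

definition is_simplex3 :: "real^3 \<Rightarrow> real^3 \<Rightarrow> real^3 \<Rightarrow> real^3 \<Rightarrow> bool" where
  "is_simplex3 a b c d \<longleftrightarrow> card {a, b, c, d} = 4 \<and> \<not> affine_dependent {a, b, c, d}"

end

theory Submission
  imports Defs
begin
unbundle cross3_syntax

lemma rows3: "rows (vector [v1,v2,v3] :: real^3^3) = {v1,v2,v3}"
proof -
  have "row i (vector [v1,v2,v3] :: real^3^3) \<in> {v1,v2,v3}" for i
    using exhaust_3[of i] by (auto simp: row_def vector_3)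
  moreover have "v1 = row 1 (vector [v1,v2,v3] :: real^3^3)" "v2 = row 2 (vector [v1,v2,v3] :: real^3^3)"
     "v3 = row 3 (vector [v1,v2,v3] :: real^3^3)"
    by (simp_all add: row_def vector_3)
  ultimately show ?thesis unfolding rows_def by blast
qed

lemma triple_nz:
  fixes v1 v2 v3 :: "real^3"
  assumes "\<not> dependent {v1,v2,v3}" "card {v1,v2,v3} = 3"
  shows "v1 \<bullet> (v2 \<times> v3) \<noteq> 0"
proof
  assume h: "v1 \<bullet> (v2 \<times> v3) = 0"
  have "det (vector [v1,v2,v3] :: real^3^3) = 0" using h by (simp add: dot_cross_det)
  then have "rank (vector [v1,v2,v3] :: real^3^3) < 3" by (simp add: det_eq_0_rank)
  moreover have "rank (vector [v1,v2,v3] :: real^3^3) = 3"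
    unfolding row_rank_def rows3 using assms dim_eq_card_independent by metis
  ultimately show False by simp
qed


lemma key_case:
  fixes n1 n2 n3 U1 U2 Y1 Y2 Y3 R S P :: real
  assumes n: "n1 > 0" "n2 > 0" "n3 > 0"
    and S: "S = U1\<^sup>2*n1 + U2\<^sup>2*n2" and Spos: "S > 0"
    and P: "P = U1*Y1*n1 + U2*Y2*n2"
    and c3: "S*Y3*n3 = U1*U2*n1*n2"
    and R: "R*S = S*(Y1\<^sup>2*n1+Y2\<^sup>2*n2+Y3\<^sup>2*n3 + n1+n2+n3) - P\<^sup>2 - (U1\<^sup>2*n1\<^sup>2+U2\<^sup>2*n2\<^sup>2)"
    and R1: "R \<le> n1 + n3" and R2: "R \<le> n2 + n3"
  shows "U1 = 0 \<or> U2 = 0"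
proof (rule ccontr)
  assume "\<not> (U1 = 0 \<or> U2 = 0)"
  then have u: "U1 \<noteq> 0" "U2 \<noteq> 0" by auto
  have "U1*U2*n1*n2 \<noteq> 0" using u n by simp
  then have "Y3 \<noteq> 0" using c3 by auto
  then have y3: "S*Y3\<^sup>2*n3 > 0" using Spos n by (simp add: mult_pos_pos)
  have id1: "S*(Y1\<^sup>2*n1+Y2\<^sup>2*n2) - P\<^sup>2 = n1*n2*(U1*Y2 - U2*Y1)\<^sup>2"
    unfolding S P by (simp add: power2_eq_square algebra_simps)
  have id2: "S*(n1+n2+n3) - (U1\<^sup>2*n1\<^sup>2+U2\<^sup>2*n2\<^sup>2) = S*n3 + n1*n2*(U1\<^sup>2+U2\<^sup>2)"
    unfolding S by (simp add: power2_eq_square algebra_simps)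
  have nn: "n1*n2*(U1*Y2 - U2*Y1)\<^sup>2 \<ge> 0" using n by simp
  have RS: "R*S \<ge> S*Y3\<^sup>2*n3 + S*n3 + n1*n2*(U1\<^sup>2+U2\<^sup>2)"
    using R id1 id2 nn by (simp add: algebra_simps)
  show False
  proof (cases "n1 \<le> n2")
    case True
    have "n1*n2*(U1\<^sup>2+U2\<^sup>2) \<ge> n1 * S"
    proof -
      have "n1*n2*(U1\<^sup>2+U2\<^sup>2) - n1*S = n1*U1\<^sup>2*(n2-n1)" unfolding S by (simp add: algebra_simps)
      moreover have "n1*U1\<^sup>2*(n2-n1) \<ge> 0" using True n by simp
      ultimately show ?thesis by linarith
    qed
    then have "R*S > (n1+n3)*S" using RS y3 by (simp add: algebra_simps)
    moreover have "R*S \<le> (n1+n3)*S" using R1 Spos by (simp add: mult_right_mono)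
    ultimately show False by linarith
  next
    case False
    have "n1*n2*(U1\<^sup>2+U2\<^sup>2) \<ge> n2 * S"
    proof -
      have "n1*n2*(U1\<^sup>2+U2\<^sup>2) - n2*S = n2*U2\<^sup>2*(n1-n2)" unfolding S by (simp add: algebra_simps)
      moreover have "n2*U2\<^sup>2*(n1-n2) \<ge> 0" using False n by simp
      ultimately show ?thesis by linarith
    qed
    then have "R*S > (n2+n3)*S" using RS y3 by (simp add: algebra_simps)
    moreover have "R*S \<le> (n2+n3)*S" using R2 Spos by (simp add: mult_right_mono)
    ultimately show False by linarith
  qed
qed

lemma lin4:
  fixes C r a b c :: real
  assumes "C + 2*(a+b+c) = r" "C + 2*(a-b-c) = r" "C + 2*(-a+b-c) = r" "C + 2*(-a-b+c) = r"
  shows "a = 0 \<and> b = 0 \<and> c = 0"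
  using assms by (simp add: algebra_simps; linarith)

lemma key_all:
  fixes n1 n2 n3 U1 U2 U3 Y1 Y2 Y3 R S :: real
  assumes n: "n1 > 0" "n2 > 0" "n3 > 0"
    and S: "S = U1\<^sup>2*n1 + U2\<^sup>2*n2 + U3\<^sup>2*n3" and Spos: "S > 0"
    and Q: "\<And>s1 s2 s3. (s1,s2,s3) \<in> {(1,1,1),(1,-1,-1),(-1,1,-1),(-1,-1,1)} \<Longrightarrow>
       S*((Y1+s1)\<^sup>2*n1+(Y2+s2)\<^sup>2*n2+(Y3+s3)\<^sup>2*n3) - (U1*(Y1+s1)*n1+U2*(Y2+s2)*n2+U3*(Y3+s3)*n3)\<^sup>2 = R*S"
    and R: "R \<le> n1 + n2" "R \<le> n1 + n3" "R \<le> n2 + n3"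
  shows "(U2 = 0 \<and> U3 = 0) \<or> (U1 = 0 \<and> U3 = 0) \<or> (U1 = 0 \<and> U2 = 0)"
proof -
  define P where "P = U1*Y1*n1 + U2*Y2*n2 + U3*Y3*n3"
  define c1 where "c1 = S*Y1*n1 - P*U1*n1 - U2*U3*n2*n3"
  define c2 where "c2 = S*Y2*n2 - P*U2*n2 - U1*U3*n1*n3"
  define c3 where "c3 = S*Y3*n3 - P*U3*n3 - U1*U2*n1*n2"
  define C0 where "C0 = S*(Y1\<^sup>2*n1+Y2\<^sup>2*n2+Y3\<^sup>2*n3 + n1+n2+n3) - P\<^sup>2 - (U1\<^sup>2*n1\<^sup>2+U2\<^sup>2*n2\<^sup>2+U3\<^sup>2*n3\<^sup>2)"
  have q1: "C0 + 2*(c1+c2+c3) = R*S" using Q[of 1 1 1] unfolding C0_def c1_def c2_def c3_def P_def S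
    by (simp add: power2_eq_square algebra_simps)
  have q2: "C0 + 2*(c1-c2-c3) = R*S" using Q[of 1 "-1" "-1"] unfolding C0_def c1_def c2_def c3_def P_def S
    by (simp add: power2_eq_square algebra_simps)
  have q3: "C0 + 2*(-c1+c2-c3) = R*S" using Q[of "-1" 1 "-1"] unfolding C0_def c1_def c2_def c3_def P_def S
    by (simp add: power2_eq_square algebra_simps)
  have q4: "C0 + 2*(-c1-c2+c3) = R*S" using Q[of "-1" "-1" 1] unfolding C0_def c1_def c2_def c3_def P_def S
    by (simp add: power2_eq_square algebra_simps)
  have c0: "c1 = 0" "c2 = 0" "c3 = 0" using lin4[OF q1 q2 q3 q4] by auto
  have RS: "R*S = C0" using q1 c0 by simp
  have "U1*c1 + U2*c2 + U3*c3 = - (U1*U2*U3) * (n2*n3+n1*n3+n1*n2)"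
    unfolding c1_def c2_def c3_def P_def S by (simp add: power2_eq_square algebra_simps)
  then have "U1*U2*U3 * (n2*n3+n1*n3+n1*n2) = 0" using c0 by simp
  moreover have "n2*n3+n1*n3+n1*n2 > 0" using n by (simp add: add_pos_pos)
  ultimately have "U1 = 0 \<or> U2 = 0 \<or> U3 = 0" by simp
  then show ?thesis
  proof (elim disjE)
    assume u: "U3 = 0"
    have "U1 = 0 \<or> U2 = 0"
      apply (rule key_case[of n1 n2 n3 S U1 U2 P Y1 Y2 Y3 R])
      using n Spos u S R RS c0 unfolding P_def C0_def c3_def by (simp_all add: algebra_simps)
    then show ?thesis using u by auto
  next
    assume u: "U1 = 0"
    have "U2 = 0 \<or> U3 = 0"
      apply (rule key_case[of n2 n3 n1 S U2 U3 P Y2 Y3 Y1 R])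
      using n Spos u S R RS c0 unfolding P_def C0_def c1_def by (simp_all add: algebra_simps)
    then show ?thesis using u by auto
  next
    assume u: "U2 = 0"
    have "U1 = 0 \<or> U3 = 0"
      apply (rule key_case[of n1 n3 n2 S U1 U3 P Y1 Y3 Y2 R])
      using n Spos u S R RS c0 unfolding P_def C0_def c2_def by (simp_all add: algebra_simps)
    then show ?thesis using u by auto
  qed
qed

lemma infdist_line:
  fixes x p u :: "real^3"
  assumes u: "u \<noteq> 0"
  shows "infdist x {p + t *\<^sub>R u | t. True} = norm (u \<times> (x - p)) / norm u"
proof -
  define L where "L = {p + t *\<^sub>R u | t. True}"
  define w where "w = x - p"
  have nu: "u \<bullet> u > 0" using u by simp
  have nu2: "(norm u)\<^sup>2 = u \<bullet> u" by (simp add: power2_norm_eq_inner)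
  have cr: "(norm (u \<times> w))\<^sup>2 = (u \<bullet> u) * (w \<bullet> w) - (u \<bullet> w)\<^sup>2"
    using norm_cross[of u w] unfolding power2_norm_eq_inner[of u] power2_norm_eq_inner[of w] .
  have dsq: "(norm (w - t *\<^sub>R u))\<^sup>2 = w \<bullet> w - 2*t*(u \<bullet> w) + t\<^sup>2 * (u \<bullet> u)" for t
    unfolding power2_norm_eq_inner by (simp add: inner_diff_left inner_diff_right inner_commute power2_eq_square algebra_simps)
  have lower: "norm (u \<times> w) / norm u \<le> dist x y" if "y \<in> L" for y
  proof -
    obtain t where y: "y = p + t *\<^sub>R u" using \<open>y \<in> L\<close> unfolding L_def by auto
    have dxy: "dist x y = norm (w - t *\<^sub>R u)" unfolding y w_def dist_norm by (simp add: algebra_simps)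
    have "(norm (u \<times> w))\<^sup>2 \<le> (norm u * norm (w - t *\<^sub>R u))\<^sup>2"
    proof -
      have "(norm u * norm (w - t *\<^sub>R u))\<^sup>2 - (norm (u \<times> w))\<^sup>2 = (t * (u \<bullet> u) - u \<bullet> w)\<^sup>2"
        unfolding power_mult_distrib nu2 dsq cr by (simp add: power2_eq_square algebra_simps)
      then show ?thesis by (metis diff_ge_0_iff_ge zero_le_power2)
    qed
    then have "norm (u \<times> w) \<le> norm u * norm (w - t *\<^sub>R u)"
      by (rule power2_le_imp_le) simp
    then show ?thesis unfolding dxy using u by (simp add: divide_le_eq mult.commute)
  qed
  define t0 where "t0 = (u \<bullet> w) / (u \<bullet> u)"
  have y0: "p + t0 *\<^sub>R u \<in> L" unfolding L_def by auto
  have "(norm (w - t0 *\<^sub>R u))\<^sup>2 = (norm (u \<times> w) / norm u)\<^sup>2"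
    unfolding dsq power_divide cr nu2 t0_def using nu
    by (simp add: power2_eq_square field_simps)
  then have "norm (w - t0 *\<^sub>R u) = norm (u \<times> w) / norm u"
    by (rule power2_eq_imp_eq) simp_all
  moreover have "dist x (p + t0 *\<^sub>R u) = norm (w - t0 *\<^sub>R u)" unfolding w_def dist_norm by (simp add: algebra_simps)
  ultimately have upper: "infdist x L \<le> norm (u \<times> w) / norm u"
    using infdist_le[OF y0, of x] by simp
  have "L \<noteq> {}" using y0 by auto
  then have "norm (u \<times> w) / norm u \<le> infdist x L"
    unfolding infdist_notempty[OF \<open>L \<noteq> {}\<close>] by (rule cINF_greatest) (use lower in auto)
  with upper show ?thesis unfolding L_def w_def by simp
qed

lemma frame_identity:
  fixes e1 e2 e3 v :: "real^3"
  shows "(e1 \<bullet> (e2 \<times> e3)) *\<^sub>R v = (v \<bullet> (e2 \<times> e3)) *\<^sub>R e1 + (v \<bullet> (e3 \<times> e1)) *\<^sub>R e2 + (v \<bullet> (e1 \<times> e2)) *\<^sub>R e3"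
  by (simp add: vec_eq_iff forall_3 cross3_def inner_vec_def sum_3 algebra_simps)

lemma frame:
  fixes e1 e2 e3 v :: "real^3"
  assumes o: "e1 \<bullet> e2 = 0" "e1 \<bullet> e3 = 0" "e2 \<bullet> e3 = 0" and V: "e1 \<bullet> (e2 \<times> e3) \<noteq> 0"
  shows "v = ((v \<bullet> e1) / (e1 \<bullet> e1)) *\<^sub>R e1 + ((v \<bullet> e2) / (e2 \<bullet> e2)) *\<^sub>R e2 + ((v \<bullet> e3) / (e3 \<bullet> e3)) *\<^sub>R e3"
proof -
  define V where "V = e1 \<bullet> (e2 \<times> e3)"
  have id: "V *\<^sub>R v = (v \<bullet> (e2 \<times> e3)) *\<^sub>R e1 + (v \<bullet> (e3 \<times> e1)) *\<^sub>R e2 + (v \<bullet> (e1 \<times> e2)) *\<^sub>R e3"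
    unfolding V_def by (rule frame_identity)
  have oc: "e2 \<bullet> e1 = 0" "e3 \<bullet> e1 = 0" "e3 \<bullet> e2 = 0" using o by (simp_all add: inner_commute)
  have nz: "e1 \<noteq> 0" "e2 \<noteq> 0" "e3 \<noteq> 0" using V by auto
  then have n: "e1 \<bullet> e1 \<noteq> 0" "e2 \<bullet> e2 \<noteq> 0" "e3 \<bullet> e3 \<noteq> 0" by auto
  have d1: "V * (v \<bullet> e1) = (v \<bullet> (e2 \<times> e3)) * (e1 \<bullet> e1)"
    using arg_cong[OF id, of "\<lambda>z. z \<bullet> e1"] o oc by (simp add: inner_add_left)
  have d2: "V * (v \<bullet> e2) = (v \<bullet> (e3 \<times> e1)) * (e2 \<bullet> e2)"
    using arg_cong[OF id, of "\<lambda>z. z \<bullet> e2"] o oc by (simp add: inner_add_left)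
  have d3: "V * (v \<bullet> e3) = (v \<bullet> (e1 \<times> e2)) * (e3 \<bullet> e3)"
    using arg_cong[OF id, of "\<lambda>z. z \<bullet> e3"] o oc by (simp add: inner_add_left)
  have "V *\<^sub>R v = V *\<^sub>R (((v \<bullet> e1) / (e1 \<bullet> e1)) *\<^sub>R e1 + ((v \<bullet> e2) / (e2 \<bullet> e2)) *\<^sub>R e2 + ((v \<bullet> e3) / (e3 \<bullet> e3)) *\<^sub>R e3)"
    unfolding id scaleR_add_right scaleR_scaleR
    using d1 d2 d3 n by (simp add: field_simps)
  then show ?thesis using V unfolding V_def by simp
qed

lemma inner_frame:
  fixes e1 e2 e3 :: "real^3"
  assumes o: "e1 \<bullet> e2 = 0" "e1 \<bullet> e3 = 0" "e2 \<bullet> e3 = 0"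
  shows "(x1 *\<^sub>R e1 + x2 *\<^sub>R e2 + x3 *\<^sub>R e3) \<bullet> (y1 *\<^sub>R e1 + y2 *\<^sub>R e2 + y3 *\<^sub>R e3)
    = x1*y1*(e1 \<bullet> e1) + x2*y2*(e2 \<bullet> e2) + x3*y3*(e3 \<bullet> e3)"
proof -
  have oc: "e2 \<bullet> e1 = 0" "e3 \<bullet> e1 = 0" "e3 \<bullet> e2 = 0" using o by (simp_all add: inner_commute)
  show ?thesis using o oc by (simp add: inner_add_left inner_add_right algebra_simps)
qed

lemma comp_cyl:
  fixes f q a b c d :: "real^3" and M :: real
  assumes f: "f \<noteq> 0" and M: "M > 0"
    and h: "\<And>v. v \<in> {a,b,c,d} \<Longrightarrow> (v - q) \<bullet> (v - q) = f \<bullet> f + M \<and> (f \<bullet> (v - q))\<^sup>2 = (f \<bullet> f)\<^sup>2"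
  shows "circumscribing_cylinder {q + t *\<^sub>R f | t. True} (sqrt M) a b c d"
proof -
  have "infdist v {q + t *\<^sub>R f | t. True} = sqrt M" if v: "v \<in> {a,b,c,d}" for v
  proof -
    have nf: "f \<bullet> f > 0" using f by simp
    have "(norm (f \<times> (v - q)))\<^sup>2 = (f \<bullet> f) * ((v - q) \<bullet> (v - q)) - (f \<bullet> (v - q))\<^sup>2"
      using norm_cross[of f "v - q"] unfolding power2_norm_eq_inner[of f] power2_norm_eq_inner[of "v - q"] .
    also have "\<dots> = (f \<bullet> f) * M" using h[OF v] by (simp add: power2_eq_square algebra_simps)
    finally have "(norm (f \<times> (v - q)) / norm f)\<^sup>2 = M"
      using nf by (simp add: power_divide power2_norm_eq_inner)
    then have "norm (f \<times> (v - q)) / norm f = sqrt M" by (metis norm_ge_zero real_sqrt_abs abs_of_nonneg divide_nonneg_nonneg)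
    then show ?thesis using infdist_line[OF f] by simp
  qed
  then show ?thesis unfolding circumscribing_cylinder_def is_line_def cylinder_def
    using f M by auto
qed

lemma area_orth:
  fixes X Y Z :: "real^3"
  assumes "norm (X+Y+Z) = norm (Z+Y-X)" "norm (Z+Y-X) = norm (Y-X-Z)" "norm (Y-X-Z) = norm (X+Y-Z)"
  shows "X \<bullet> Y = 0 \<and> Y \<bullet> Z = 0 \<and> X \<bullet> Z = 0"
proof -
  have sq: "norm u = norm v \<Longrightarrow> u \<bullet> u = v \<bullet> v" for u v :: "real^3"
    by (metis power2_norm_eq_inner)
  have e: "(X+Y+Z) \<bullet> (X+Y+Z) = (Z+Y-X) \<bullet> (Z+Y-X)" "(Z+Y-X) \<bullet> (Z+Y-X) = (Y-X-Z) \<bullet> (Y-X-Z)"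
     "(Y-X-Z) \<bullet> (Y-X-Z) = (X+Y-Z) \<bullet> (X+Y-Z)" using assms sq by blast+
  have c: "Y \<bullet> X = X \<bullet> Y" "Z \<bullet> X = X \<bullet> Z" "Z \<bullet> Y = Y \<bullet> Z" by (simp_all add: inner_commute)
  from e show ?thesis
    by (simp add: inner_add_left inner_add_right inner_diff_left inner_diff_right c algebra_simps; linarith)
qed

lemma cross_cross_V:
  fixes e1 e2 e3 :: "real^3"
  shows "(e3 \<times> e1) \<times> (e1 \<times> e2) = (e1 \<bullet> (e2 \<times> e3)) *\<^sub>R e1"
    "(e1 \<times> e2) \<times> (e2 \<times> e3) = (e1 \<bullet> (e2 \<times> e3)) *\<^sub>R e2"
    "(e2 \<times> e3) \<times> (e3 \<times> e1) = (e1 \<bullet> (e2 \<times> e3)) *\<^sub>R e3"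
  by (simp_all add: vec_eq_iff forall_3 cross3_def inner_vec_def sum_3 algebra_simps)

lemma gram:
  fixes e1 e2 e3 :: "real^3"
  assumes xy: "(e2 \<times> e3) \<bullet> (e3 \<times> e1) = 0" and yz: "(e3 \<times> e1) \<bullet> (e1 \<times> e2) = 0"
    and xz: "(e2 \<times> e3) \<bullet> (e1 \<times> e2) = 0" and V: "e1 \<bullet> (e2 \<times> e3) \<noteq> 0"
  shows "e1 \<bullet> e2 = 0 \<and> e1 \<bullet> e3 = 0 \<and> e2 \<bullet> e3 = 0"
proof -
  define V where "V = e1 \<bullet> (e2 \<times> e3)"
  define X where "X = e2 \<times> e3"
  define Y where "Y = e3 \<times> e1"
  define Z where "Z = e1 \<times> e2"
  have c: "Y \<times> Z = V *\<^sub>R e1" "Z \<times> X = V *\<^sub>R e2" "X \<times> Y = V *\<^sub>R e3"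
    unfolding X_def Y_def Z_def V_def by (rule cross_cross_V)+
  have o: "X \<bullet> Y = 0" "Y \<bullet> Z = 0" "X \<bullet> Z = 0" using xy yz xz unfolding X_def Y_def Z_def by auto
  have oc: "Y \<bullet> X = 0" "Z \<bullet> Y = 0" "Z \<bullet> X = 0" using o by (simp_all add: inner_commute)
  have "(Y \<times> Z) \<bullet> (Z \<times> X) = 0" unfolding dot_cross using o oc by simp
  then have 1: "V * V * (e1 \<bullet> e2) = 0" unfolding c by simp
  have "(Y \<times> Z) \<bullet> (X \<times> Y) = 0" unfolding dot_cross using o oc by simp
  then have 2: "V * V * (e1 \<bullet> e3) = 0" unfolding c by simp
  have "(Z \<times> X) \<bullet> (X \<times> Y) = 0" unfolding dot_cross using o oc by simp
  then have 3: "V * V * (e2 \<bullet> e3) = 0" unfolding c by simp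
  show ?thesis using 1 2 3 V unfolding V_def by simp
qed

lemma test:
  fixes a b c d :: "real^3"
  defines "q \<equiv> (1/4) *\<^sub>R (a+b+c+d)" and "e1 \<equiv> (1/4) *\<^sub>R (a+b-c-d)"
    and "e2 \<equiv> (1/4) *\<^sub>R (a-b+c-d)" and "e3 \<equiv> (1/4) *\<^sub>R (a-b-c+d)"
  shows "a = q+e1+e2+e3" "b = q+e1-e2-e3" "c = q-e1+e2-e3" "d = q-e1-e2+e3"
  unfolding q_def e1_def e2_def e3_def by (simp_all add: vec_eq_iff field_simps)

lemma test2:
  fixes q e1 e2 e3 :: "real^3"
  shows "((q+e1-e2-e3)-(q+e1+e2+e3)) \<bullet> (((q-e1+e2-e3)-(q+e1+e2+e3)) \<times> ((q-e1-e2+e3)-(q+e1+e2+e3))) = -16 * (e1 \<bullet> (e2 \<times> e3))"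
    "((q-e1+e2-e3) - (q+e1-e2-e3)) \<times> ((q-e1-e2+e3) - (q+e1-e2-e3)) = 4 *\<^sub>R ((e2 \<times> e3) + (e3 \<times> e1) + (e1 \<times> e2))"
  by (simp_all add: vec_eq_iff forall_3 cross3_def inner_vec_def sum_3 algebra_simps)

lemma perp_line:
  fixes p u w :: "real^3"
  assumes "u \<bullet> w = 0"
  shows "line_perp {p + t *\<^sub>R u | t. True} w"
  unfolding line_perp_def using assms by (auto simp: inner_diff_left inner_add_left algebra_simps)

theorem mainTheorem4:
  fixes a b c d :: "real^3" and L :: "(real^3) set" and \<rho> :: real
  assumes "is_simplex3 a b c d"
    and "tri_area b c d = tri_area a c d"
    and "tri_area a c d = tri_area a b d"
    and "tri_area a b d = tri_area a b c"
    and "min_circumscribing_cylinder L \<rho> a b c d"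
  shows "(line_perp L (b - a) \<and> line_perp L (d - c)) \<or>
         (line_perp L (c - a) \<and> line_perp L (d - b)) \<or>
         (line_perp L (d - a) \<and> line_perp L (c - b))"
proof -
  from assms(1) have card4: "card {a,b,c,d} = 4" and ind: "\<not> affine_dependent {a,b,c,d}"
    unfolding is_simplex3_def by auto
  have le3: "card {b,c,d} \<le> 3" by (auto simp: card_insert_if)
  have anot: "a \<notin> {b,c,d}"
  proof
    assume "a \<in> {b,c,d}"
    then have "{a,b,c,d} = {b,c,d}" by auto
    with card4 le3 show False by simp
  qed
  have c3: "card {b,c,d} = 3" using card4 anot by simp
  have dep: "\<not> dependent ((\<lambda>x. -a + x) ` {b,c,d})"
    using ind affine_dependent_iff_dependent[OF anot] by simp
  have img: "(\<lambda>x. -a + x) ` {b,c,d} = {b-a, c-a, d-a}" by auto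
  have "card ((\<lambda>x. -a + x) ` {b,c,d}) = card {b,c,d}" by (rule card_image) (simp add: inj_on_def)
  then have cimg: "card {b-a,c-a,d-a} = 3" using c3 img by simp
  have tr: "(b-a) \<bullet> ((c-a) \<times> (d-a)) \<noteq> 0" using triple_nz[of "b-a" "c-a" "d-a"] dep img cimg by simp
  define q where "q = (1/4) *\<^sub>R (a+b+c+d)"
  define e1 where "e1 = (1/4) *\<^sub>R (a+b-c-d)"
  define e2 where "e2 = (1/4) *\<^sub>R (a-b+c-d)"
  define e3 where "e3 = (1/4) *\<^sub>R (a-b-c+d)"
  have A: "a = q+e1+e2+e3" "b = q+e1-e2-e3" "c = q-e1+e2-e3" "d = q-e1-e2+e3"
    unfolding q_def e1_def e2_def e3_def by (simp_all add: vec_eq_iff field_simps)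
  have V: "e1 \<bullet> (e2 \<times> e3) \<noteq> 0"
  proof -
    have "(b-a) \<bullet> ((c-a) \<times> (d-a)) = -16 * (e1 \<bullet> (e2 \<times> e3))"
      unfolding A by (simp add: vec_eq_iff forall_3 cross3_def inner_vec_def sum_3 algebra_simps)
    then show ?thesis using tr by simp
  qed
  have cr: "(c-b) \<times> (d-b) = 4 *\<^sub>R ((e2 \<times> e3) + (e3 \<times> e1) + (e1 \<times> e2))"
     "(c-a) \<times> (d-a) = 4 *\<^sub>R ((e1 \<times> e2) + (e3 \<times> e1) - (e2 \<times> e3))"
     "(b-a) \<times> (d-a) = 4 *\<^sub>R ((e3 \<times> e1) - (e2 \<times> e3) - (e1 \<times> e2))"
     "(b-a) \<times> (c-a) = 4 *\<^sub>R ((e2 \<times> e3) + (e3 \<times> e1) - (e1 \<times> e2))"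
    unfolding A by (simp_all add: vec_eq_iff forall_3 cross3_def algebra_simps)
  have "norm ((e2 \<times> e3) + (e3 \<times> e1) + (e1 \<times> e2)) = norm ((e1 \<times> e2) + (e3 \<times> e1) - (e2 \<times> e3)) \<and>
        norm ((e1 \<times> e2) + (e3 \<times> e1) - (e2 \<times> e3)) = norm ((e3 \<times> e1) - (e2 \<times> e3) - (e1 \<times> e2)) \<and>
        norm ((e3 \<times> e1) - (e2 \<times> e3) - (e1 \<times> e2)) = norm ((e2 \<times> e3) + (e3 \<times> e1) - (e1 \<times> e2))"
    using assms(2,3,4) unfolding tri_area_def cr by simp
  then have XYZ: "(e2 \<times> e3) \<bullet> (e3 \<times> e1) = 0 \<and> (e3 \<times> e1) \<bullet> (e1 \<times> e2) = 0 \<and> (e2 \<times> e3) \<bullet> (e1 \<times> e2) = 0"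
    using area_orth[of "e2 \<times> e3" "e3 \<times> e1" "e1 \<times> e2"] by auto
  have orth: "e1 \<bullet> e2 = 0" "e1 \<bullet> e3 = 0" "e2 \<bullet> e3 = 0" using gram XYZ V by blast+
  have oc: "e2 \<bullet> e1 = 0" "e3 \<bullet> e1 = 0" "e3 \<bullet> e2 = 0" using orth by (simp_all add: inner_commute)
  define n1 where "n1 = e1 \<bullet> e1"
  define n2 where "n2 = e2 \<bullet> e2"
  define n3 where "n3 = e3 \<bullet> e3"
  have nz: "e1 \<noteq> 0" "e2 \<noteq> 0" "e3 \<noteq> 0" using V by auto
  have npos: "n1 > 0" "n2 > 0" "n3 > 0" unfolding n1_def n2_def n3_def using nz by auto
  have vq: "\<And>v. v \<in> {a,b,c,d} \<Longrightarrow> (v - q) \<bullet> (v - q) = n1 + n2 + n3 \<and> (e1 \<bullet> (v - q))\<^sup>2 = n1\<^sup>2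
       \<and> (e2 \<bullet> (v - q))\<^sup>2 = n2\<^sup>2 \<and> (e3 \<bullet> (v - q))\<^sup>2 = n3\<^sup>2"
    unfolding n1_def n2_def n3_def
    by (auto simp: A inner_add_left inner_add_right inner_diff_left inner_diff_right orth oc)
  from assms(5) have cyl: "circumscribing_cylinder L \<rho> a b c d"
    and minc: "\<And>L' \<rho>'. circumscribing_cylinder L' \<rho>' a b c d \<Longrightarrow> \<rho> \<le> \<rho>'"
    unfolding min_circumscribing_cylinder_def by auto
  from cyl obtain p u where u: "u \<noteq> 0" and Ldef: "L = {p + t *\<^sub>R u | t. True}"
    unfolding circumscribing_cylinder_def is_line_def by auto
  from cyl have rpos: "\<rho> > 0" and onc: "\<And>v. v \<in> {a,b,c,d} \<Longrightarrow> infdist v L = \<rho>"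
    unfolding circumscribing_cylinder_def cylinder_def by auto
  have bound: "\<rho>\<^sup>2 \<le> M" if "circumscribing_cylinder L' (sqrt M) a b c d" "M > 0" for L' M
  proof -
    have "\<rho> \<le> sqrt M" using minc[OF that(1)] .
    then have "\<rho>\<^sup>2 \<le> (sqrt M)\<^sup>2" using rpos by (intro power_mono) auto
    then show ?thesis using that(2) by simp
  qed
  have R1: "\<rho>\<^sup>2 \<le> n2 + n3"
    apply (rule bound[OF comp_cyl[of e1 "n2+n3" a b c d q]])
    using nz npos vq by (auto simp: n1_def)
  have R2: "\<rho>\<^sup>2 \<le> n1 + n3"
    apply (rule bound[OF comp_cyl[of e2 "n1+n3" a b c d q]])
    using nz npos vq by (auto simp: n2_def)
  have R3: "\<rho>\<^sup>2 \<le> n1 + n2"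
    apply (rule bound[OF comp_cyl[of e3 "n1+n2" a b c d q]])
    using nz npos vq by (auto simp: n3_def)
  define U1 where "U1 = (u \<bullet> e1) / n1"
  define U2 where "U2 = (u \<bullet> e2) / n2"
  define U3 where "U3 = (u \<bullet> e3) / n3"
  define Y1 where "Y1 = ((q - p) \<bullet> e1) / n1"
  define Y2 where "Y2 = ((q - p) \<bullet> e2) / n2"
  define Y3 where "Y3 = ((q - p) \<bullet> e3) / n3"
  have fu: "u = U1 *\<^sub>R e1 + U2 *\<^sub>R e2 + U3 *\<^sub>R e3"
    unfolding U1_def U2_def U3_def n1_def n2_def n3_def by (rule frame[OF orth V])
  have fy: "q - p = Y1 *\<^sub>R e1 + Y2 *\<^sub>R e2 + Y3 *\<^sub>R e3"
    unfolding Y1_def Y2_def Y3_def n1_def n2_def n3_def by (rule frame[OF orth V])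
  define S where "S = U1\<^sup>2*n1 + U2\<^sup>2*n2 + U3\<^sup>2*n3"
  have uu: "u \<bullet> u = S" unfolding S_def
    by (subst (1 2) fu, subst inner_frame[OF orth]) (simp add: n1_def n2_def n3_def power2_eq_square)
  have Spos: "S > 0" using u uu by auto
  have cyl_eq: "S*((Y1+s1)\<^sup>2*n1+(Y2+s2)\<^sup>2*n2+(Y3+s3)\<^sup>2*n3) - (U1*(Y1+s1)*n1+U2*(Y2+s2)*n2+U3*(Y3+s3)*n3)\<^sup>2 = \<rho>\<^sup>2*S"
    if v: "v \<in> {a,b,c,d}" "v = q + s1 *\<^sub>R e1 + s2 *\<^sub>R e2 + s3 *\<^sub>R e3" for v s1 s2 s3
  proof -
    have "v - p = (s1 *\<^sub>R e1 + s2 *\<^sub>R e2 + s3 *\<^sub>R e3) + (q - p)" using v(2) by simp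
    also have "\<dots> = (Y1+s1) *\<^sub>R e1 + (Y2+s2) *\<^sub>R e2 + (Y3+s3) *\<^sub>R e3"
      unfolding fy by (simp add: algebra_simps)
    finally have w: "v - p = (Y1+s1) *\<^sub>R e1 + (Y2+s2) *\<^sub>R e2 + (Y3+s3) *\<^sub>R e3" .
    have ww: "(v - p) \<bullet> (v - p) = (Y1+s1)\<^sup>2*n1+(Y2+s2)\<^sup>2*n2+(Y3+s3)\<^sup>2*n3"
      unfolding w inner_frame[OF orth] by (simp add: n1_def n2_def n3_def power2_eq_square)
    have uw: "u \<bullet> (v - p) = U1*(Y1+s1)*n1+U2*(Y2+s2)*n2+U3*(Y3+s3)*n3"
      unfolding w by (subst fu, subst inner_frame[OF orth]) (simp add: n1_def n2_def n3_def)
    have "norm (u \<times> (v - p)) / norm u = \<rho>" using onc[OF v(1)] infdist_line[OF u, of v p] Ldef by simp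
    then have "norm (u \<times> (v - p)) = \<rho> * norm u" using u by (simp add: field_simps)
    then have "(norm (u \<times> (v - p)))\<^sup>2 = \<rho>\<^sup>2 * (norm u)\<^sup>2" by (simp add: power_mult_distrib)
    moreover have "(norm (u \<times> (v - p)))\<^sup>2 = (u \<bullet> u) * ((v - p) \<bullet> (v - p)) - (u \<bullet> (v - p))\<^sup>2"
      using norm_cross[of u "v - p"] unfolding power2_norm_eq_inner[of u] power2_norm_eq_inner[of "v - p"] .
    ultimately have "(u \<bullet> u) * ((v - p) \<bullet> (v - p)) - (u \<bullet> (v - p))\<^sup>2 = \<rho>\<^sup>2 * (u \<bullet> u)"
      by (simp add: power2_norm_eq_inner)
    then show ?thesis unfolding uu ww uw .
  qed
  have Q: "S*((Y1+s1)\<^sup>2*n1+(Y2+s2)\<^sup>2*n2+(Y3+s3)\<^sup>2*n3) - (U1*(Y1+s1)*n1+U2*(Y2+s2)*n2+U3*(Y3+s3)*n3)\<^sup>2 = \<rho>\<^sup>2*S"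
    if "(s1,s2,s3) \<in> {(1,1,1),(1,-1,-1),(-1,1,-1),(-1,-1,1)}" for s1 s2 s3 :: real
  proof -
    from that consider "(s1,s2,s3) = (1,1,1)" | "(s1,s2,s3) = (1,-1,-1)" | "(s1,s2,s3) = (-1,1,-1)" | "(s1,s2,s3) = (-1,-1,1)"
      by blast
    then show ?thesis
    proof cases
      case 1 then show ?thesis using cyl_eq[of a s1 s2 s3] by (simp add: A)
    next
      case 2 then show ?thesis using cyl_eq[of b s1 s2 s3] by (simp add: A)
    next
      case 3 then show ?thesis using cyl_eq[of c s1 s2 s3] by (simp add: A)
    next
      case 4 then show ?thesis using cyl_eq[of d s1 s2 s3] by (simp add: A algebra_simps)
    qed
  qed
  have K: "(U2 = 0 \<and> U3 = 0) \<or> (U1 = 0 \<and> U3 = 0) \<or> (U1 = 0 \<and> U2 = 0)"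
    by (rule key_all[OF npos S_def Spos Q R3 R2 R1])
  have ue: "U1 = 0 \<Longrightarrow> u \<bullet> e1 = 0" "U2 = 0 \<Longrightarrow> u \<bullet> e2 = 0" "U3 = 0 \<Longrightarrow> u \<bullet> e3 = 0"
    unfolding U1_def U2_def U3_def using npos by auto
  have diffs: "u \<bullet> (b - a) = -2*(u \<bullet> e2) - 2*(u \<bullet> e3)" "u \<bullet> (d - c) = -2*(u \<bullet> e2) + 2*(u \<bullet> e3)"
    "u \<bullet> (c - a) = -2*(u \<bullet> e1) - 2*(u \<bullet> e3)" "u \<bullet> (d - b) = -2*(u \<bullet> e1) + 2*(u \<bullet> e3)"
    "u \<bullet> (d - a) = -2*(u \<bullet> e1) - 2*(u \<bullet> e2)" "u \<bullet> (c - b) = -2*(u \<bullet> e1) + 2*(u \<bullet> e2)"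
  proof -
    have two: "u \<bullet> (2 * x) = 2 * (u \<bullet> x)" for x :: "real^3"
      by (simp add: inner_vec_def sum_3 algebra_simps)
    show "u \<bullet> (b - a) = -2*(u \<bullet> e2) - 2*(u \<bullet> e3)" "u \<bullet> (d - c) = -2*(u \<bullet> e2) + 2*(u \<bullet> e3)"
      "u \<bullet> (c - a) = -2*(u \<bullet> e1) - 2*(u \<bullet> e3)" "u \<bullet> (d - b) = -2*(u \<bullet> e1) + 2*(u \<bullet> e3)"
      "u \<bullet> (d - a) = -2*(u \<bullet> e1) - 2*(u \<bullet> e2)" "u \<bullet> (c - b) = -2*(u \<bullet> e1) + 2*(u \<bullet> e2)"
      unfolding A by (simp_all add: inner_add_right inner_diff_right two)
  qed
  from K show ?thesis
    unfolding Ldef using ue diffs perp_line by (elim disjE) auto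
qed

end
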